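(* Let $K$ be a field and let $f(X)\in XK[X^2]$ be a monic polynomial. If $f(X)=g(X)\circ h(X)$ with $g,h\in K[X]$, where the characteristic of $K$ does not divide $\deg(g)$, then there exists a degree-one $\rho(X)\in K[X]$ such that both $g(\rho(X))$ and $\rho^{-1}(h(X))$ are monic polynomials in $XK[X^2]$.
   Context: $XK[X^2]$ denotes the set of polynomials all of whose terms have odd degree. For a degree-one $\rho(X)=aX+b\in K[X]$, $\rho^{-1}(X):=(X-b)/a$ is its compositional inverse. If $\mathrm{char}(K)=0$ the divisibility hypothesis holds automatically. *)

theory Defs
  imports "HOL-Computational_Algebra.Polynomial"
begin

text \<open>p lies in X K[X^2]: every nonzero coefficient sits in odd degree.\<close>
definition odd_poly :: "'a::zero poly \<Rightarrow> bool" where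
  "odd_poly p \<longleftrightarrow> (\<forall>i. coeff p i \<noteq> 0 \<longrightarrow> odd i)"

text \<open>Compositional inverse of the degree-one polynomial a X + b, namely (X - b)/a.\<close>
definition lin_inv :: "'a::field poly \<Rightarrow> 'a poly" where
  "lin_inv r = [: - coeff r 0 / coeff r 1, 1 / coeff r 1 :]"

end

theory Submission
  imports Defs
begin

definition parp :: "bool \<Rightarrow> 'a::zero poly \<Rightarrow> bool" where
  "parp b p \<longleftrightarrow> (\<forall>i. coeff p i \<noteq> 0 \<longrightarrow> (odd i \<longleftrightarrow> b))"

lemma odd_poly_parp: "odd_poly p \<longleftrightarrow> parp True p"
  by (simp add: odd_poly_def parp_def)

lemma parp_mult:
  fixes p q :: "'a::comm_ring_1 poly"
  assumes "parp a p" "parp b q"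
  shows "parp (a \<noteq> b) (p * q)"
  unfolding parp_def
proof (intro allI impI)
  fix n assume nz: "coeff (p * q) n \<noteq> 0"
  show "odd n \<longleftrightarrow> (a \<noteq> b)"
  proof (rule ccontr)
    assume bad: "\<not> (odd n \<longleftrightarrow> (a \<noteq> b))"
    have "coeff (p * q) n = (\<Sum>i\<le>n. coeff p i * coeff q (n - i))" by (rule coeff_mult)
    also have "\<dots> = 0"
    proof (rule sum.neutral, intro ballI)
      fix i assume i: "i \<in> {..n}"
      show "coeff p i * coeff q (n - i) = 0"
      proof (rule ccontr)
        assume "coeff p i * coeff q (n - i) \<noteq> 0"
        then have "coeff p i \<noteq> 0" "coeff q (n - i) \<noteq> 0" by auto
        then have "odd i = a" "odd (n - i) = b" using assms unfolding parp_def by auto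
        moreover have "n = i + (n - i)" using i by auto
        ultimately show False using bad by (metis odd_add)
      qed
    qed
    finally show False using nz by simp
  qed
qed

lemma parp_power:
  fixes p :: "'a::comm_ring_1 poly"
  assumes "parp True p"
  shows "parp (odd k) (p ^ k)"
proof (induction k)
  case 0
  then show ?case by (auto simp: parp_def coeff_1 split: if_splits)
next
  case (Suc k)
  have "parp (True \<noteq> odd k) (p * p ^ k)" by (rule parp_mult[OF assms Suc])
  then show ?case by simp
qed

lemma parp_add: "parp b (p::'a::comm_ring_1 poly) \<Longrightarrow> parp b q \<Longrightarrow> parp b (p + q)"
  unfolding parp_def by (metis add.right_neutral add_0 coeff_add)

lemma parp_uminus: "parp b (p::'a::comm_ring_1 poly) \<Longrightarrow> parp b (- p)"
  unfolding parp_def by simp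

lemma parp_diff: "parp b (p::'a::comm_ring_1 poly) \<Longrightarrow> parp b q \<Longrightarrow> parp b (p - q)"
  using parp_add[of b p "-q"] parp_uminus[of b q] by simp

lemma parp_pcompose:
  fixes p q :: "'a::comm_ring_1 poly"
  assumes q: "parp True q"
  shows "parp b p \<Longrightarrow> parp b (pcompose p q)"
proof (induction p arbitrary: b)
  case 0
  then show ?case by (simp add: parp_def)
next
  case (pCons a p)
  have pp: "parp (\<not> b) p"
    using pCons.prems unfolding parp_def by (metis coeff_pCons_Suc odd_Suc_div_two even_Suc)
  have a: "b \<Longrightarrow> a = 0"
    using pCons.prems unfolding parp_def by (metis coeff_pCons_0 even_zero)
  have c: "parp b [:a:]"
    using a by (cases b) (auto simp: parp_def coeff_pCons split: nat.splits)
  have "parp (True \<noteq> (\<not> b)) (q * pcompose p q)"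
    by (rule parp_mult[OF q pCons.IH[OF pp]])
  then have "parp b (q * pcompose p q)" by simp
  then show ?case using c by (simp add: pcompose_pCons parp_add)
qed

definition evpart :: "'a::comm_ring_1 poly \<Rightarrow> 'a poly" where
  "evpart p = (\<Sum>i\<le>degree p. monom (if even i then coeff p i else 0) i)"

lemma coeff_evpart: "coeff (evpart (p::'a::comm_ring_1 poly)) j = (if even j then coeff p j else 0)"
proof -
  have "coeff (evpart p) j = (\<Sum>i\<le>degree p. if j = i then (if even i then coeff p i else 0) else 0)"
    unfolding evpart_def coeff_sum coeff_monom by (intro sum.cong) auto
  also have "\<dots> = (if j \<le> degree p then (if even j then coeff p j else 0) else 0)"
    by (simp add: sum.delta)
  also have "\<dots> = (if even j then coeff p j else 0)"
    by (auto simp: coeff_eq_0)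
  finally show ?thesis .
qed

lemma pcompose_monom1: "pcompose (monom (1::'a::comm_ring_1) n) q = q ^ n"
  by (induction n) (simp_all add: monom_Suc pcompose_pCons monom_0)


lemma monic_pow_mult:
  fixes p q :: "'a::field poly"
  assumes "lead_coeff p = 1" "degree p = m" "lead_coeff q = 1" "degree q = m"
  shows "lead_coeff (p ^ a * q ^ b) = 1 \<and> degree (p ^ a * q ^ b) = (a + b) * m"
proof -
  have p0: "p \<noteq> 0" and q0: "q \<noteq> 0" using assms by auto
  have "p ^ a \<noteq> 0" "q ^ b \<noteq> 0" using p0 q0 by auto
  have "lead_coeff (p ^ a * q ^ b) = lead_coeff (p ^ a) * lead_coeff (q ^ b)"
    by (rule lead_coeff_mult)
  also have "\<dots> = 1" unfolding lead_coeff_power using assms by simp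
  finally show ?thesis using assms p0 q0 \<open>p ^ a \<noteq> 0\<close> \<open>q ^ b \<noteq> 0\<close>
    by (simp add: degree_mult_eq degree_power_eq algebra_simps)
qed

lemma approx_odd:
  fixes F h :: "'a::field poly"
  assumes F: "odd_poly F" and lh: "lead_coeff h = 1" and dh: "degree h = m" and om: "odd m"
    and h0: "coeff h 0 = 0" and on: "odd n" and nz: "of_nat n \<noteq> (0::'a)"
    and dF: "degree (F - h ^ n) \<le> m * (n - 1)"
  shows "odd_poly h"
proof -
  define e where "e = evpart h"
  define od where "od = h - e"
  have ce: "coeff e i = (if even i then coeff h i else 0)" for i
    unfolding e_def by (rule coeff_evpart)
  have co: "coeff od i = (if odd i then coeff h i else 0)" for i
    unfolding od_def by (simp add: ce)
  have po: "parp True od" unfolding parp_def co by auto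
  show ?thesis
  proof (cases "e = 0")
    case True
    then have "h = od" unfolding od_def by simp
    then show ?thesis using po odd_poly_parp by auto
  next
    case False
    define k where "k = degree e"
    have cek: "coeff e k \<noteq> 0" using False k_def by simp
    then have ek: "even k" using ce by (auto split: if_splits)
    have k0: "k \<noteq> 0" using cek ce[of 0] h0 by (metis even_zero)
    have "k \<le> m" using cek ce dh by (metis le_degree)
    with ek om have km: "k < m" by (cases "k = m") auto
    have lo: "lead_coeff od = 1" and dgo: "degree od = m"
    proof -
      have "coeff od m = 1" using co om lh dh by simp
      moreover have "degree od \<le> m" using co dh by (intro degree_le) (auto simp: coeff_eq_0)
      ultimately have "degree od = m" by (metis le_antisym le_degree one_neq_zero)
      then show "degree od = m" "lead_coeff od = 1" using \<open>coeff od m = 1\<close> by auto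
    qed
    define S where "S = (\<Sum>i<n. od ^ (n - Suc i) * h ^ i)"
    have hS: "h ^ n - od ^ n = e * S"
      unfolding S_def power_diff_sumr2 od_def by simp
    have T: "lead_coeff (od ^ (n - Suc i) * h ^ i) = 1 \<and> degree (od ^ (n - Suc i) * h ^ i) = m * (n - 1)"
      if "i < n" for i
    proof -
      have "n - Suc i + i = n - 1" using that by simp
      then show ?thesis using monic_pow_mult[OF lo dgo lh dh, of "n - Suc i" i] by (metis mult.commute)
    qed
    have cS: "coeff S (m * (n - 1)) = of_nat n"
    proof -
      have "coeff S (m * (n - 1)) = (\<Sum>i<n. (1::'a))"
        unfolding S_def coeff_sum
      proof (intro sum.cong refl)
        fix i assume "i \<in> {..<n}"
        then have "i < n" by simp
        then have Ti: "lead_coeff (od ^ (n - Suc i) * h ^ i) = 1 \<and> degree (od ^ (n - Suc i) * h ^ i) = m * (n - 1)"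
          by (rule T)
        then show "coeff (od ^ (n - Suc i) * h ^ i) (m * (n - 1)) = 1" by metis
      qed
      then show ?thesis by simp
    qed
    have "degree S \<le> m * (n - 1)"
      unfolding S_def
    proof (intro degree_le allI impI)
      fix j assume j: "m * (n - 1) < j"
      show "coeff (\<Sum>i<n. od ^ (n - Suc i) * h ^ i) j = 0"
        unfolding coeff_sum
      proof (intro sum.neutral ballI)
        fix i assume "i \<in> {..<n}"
        then have "i < n" by simp
        then have "degree (od ^ (n - Suc i) * h ^ i) = m * (n - 1)" using T by blast
        then show "coeff (od ^ (n - Suc i) * h ^ i) j = 0" using j by (intro coeff_eq_0) simp
      qed
    qed
    then have dS: "degree S = m * (n - 1)" using cS nz by (metis le_antisym le_degree)
    define N where "N = k + m * (n - 1)"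
    have cN: "coeff (e * S) N = coeff e k * of_nat n"
      unfolding N_def using coeff_mult_degree_sum[of e S] dS cS k_def by simp
    have "coeff (e * S) N \<noteq> 0" using cN cek nz by simp
    moreover have "coeff (F - h ^ n) N = 0" using dF k0 unfolding N_def
      by (intro coeff_eq_0) simp
    moreover have evN: "even N" unfolding N_def using ek on by simp
    moreover have "coeff F N = 0" using F evN unfolding odd_poly_def by auto
    moreover have "coeff (od ^ n) N = 0"
      using parp_power[OF po, of n] on evN unfolding parp_def by auto
    moreover have "F - h ^ n = F - od ^ n - e * S" using hS by (simp add: algebra_simps)
    ultimately show ?thesis by simp
  qed
qed

lemma odd_outer:
  fixes f g h :: "'a::field poly"
  assumes f: "odd_poly f" and fgh: "f = pcompose g h" and h: "odd_poly h" and dh: "degree h > 0"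
  shows "odd_poly g"
proof -
  define e where "e = evpart g"
  define od where "od = g - e"
  have ce: "coeff e i = (if even i then coeff g i else 0)" for i
    unfolding e_def by (rule coeff_evpart)
  have co: "coeff od i = (if odd i then coeff g i else 0)" for i
    unfolding od_def by (simp add: ce)
  have po: "parp True od" unfolding parp_def co by auto
  have pe: "parp False e" unfolding parp_def ce by auto
  have ph: "parp True h" using h odd_poly_parp by auto
  have "pcompose e h = f - pcompose od h" unfolding fgh od_def by (simp add: pcompose_diff)
  moreover have "parp True (f - pcompose od h)"
    using parp_diff[OF f[unfolded odd_poly_parp] parp_pcompose[OF ph po]] .
  ultimately have a: "parp True (pcompose e h)" by simp
  have b: "parp False (pcompose e h)" by (rule parp_pcompose[OF ph pe])
  have "pcompose e h = 0"
    using a b unfolding parp_def by (intro poly_eqI) auto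
  then have "e = 0" using pcompose_eq_0 dh by blast
  then have "g = od" unfolding od_def by simp
  then show ?thesis using po odd_poly_parp by auto
qed


theorem lemma2p4:
  fixes f g h :: "'a::field poly"
  assumes "lead_coeff f = 1"
    and "odd_poly f"
    and "f = pcompose g h"
    and "of_nat (degree g) \<noteq> (0::'a)"
  shows "\<exists>\<rho>. degree \<rho> = 1 \<and>
           lead_coeff (pcompose g \<rho>) = 1 \<and> odd_poly (pcompose g \<rho>) \<and>
           lead_coeff (pcompose (lin_inv \<rho>) h) = 1 \<and> odd_poly (pcompose (lin_inv \<rho>) h)"
proof -
  note lf = assms(1) and of = assms(2) and fgh = assms(3) and nz = assms(4)
  define n where "n = degree g"
  define m where "m = degree h"
  have m0: "m > 0"
  proof (rule ccontr)
    assume "\<not> m > 0"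
    then have "degree f = 0" unfolding fgh m_def by (simp add: degree_pcompose)
    then have "coeff f 0 \<noteq> 0" using lf by simp
    then show False using of unfolding odd_poly_def by auto
  qed
  have df: "degree f = n * m" unfolding fgh n_def m_def by (simp add: degree_pcompose)
  have "odd (degree f)" using of lf unfolding odd_poly_def by auto
  then have on: "odd n" and om: "odd m" using df by auto
  define a where "a = lead_coeff h"
  define b where "b = coeff h 0"
  have a0: "a \<noteq> 0" using m0 unfolding a_def m_def by auto
  define \<rho> where "\<rho> = [:b, a:]"
  have d\<rho>: "degree \<rho> = 1" using a0 unfolding \<rho>_def by simp
  have L: "lin_inv \<rho> = [:- b / a, 1 / a:]" unfolding lin_inv_def \<rho>_def by simp
  define h1 where "h1 = pcompose (lin_inv \<rho>) h"
  have dL: "degree (lin_inv \<rho>) = 1" using a0 L by simp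
  have dh1: "degree h1 = m" unfolding h1_def m_def by (simp add: degree_pcompose dL)
  have lh1: "lead_coeff h1 = 1"
    unfolding h1_def using lead_coeff_comp[of h "lin_inv \<rho>"] m0 dL a0 L
    by (simp add: m_def a_def)
  have h10: "coeff h1 0 = 0" unfolding h1_def L using a0 by (simp add: b_def field_simps)
  have "pcompose \<rho> (lin_inv \<rho>) = [:0, 1:]" unfolding L unfolding \<rho>_def using a0
    by (simp add: pcompose_pCons field_simps)
  then have \<rho>h1: "pcompose \<rho> h1 = h" unfolding h1_def by (simp add: pcompose_assoc pcompose_pCons)
  define g1 where "g1 = pcompose g \<rho>"
  have fg1: "f = pcompose g1 h1" unfolding g1_def fgh by (simp add: pcompose_assoc[symmetric] \<rho>h1)
  have dg1: "degree g1 = n" unfolding g1_def n_def by (simp add: degree_pcompose d\<rho>)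
  have lg1: "lead_coeff g1 = 1"
    using lead_coeff_comp[of h1 g1] dh1 m0 lh1 lf fg1 by simp
  have "degree (g1 - monom 1 n) \<le> n - 1"
  proof (intro degree_le allI impI)
    fix j assume "n - 1 < j"
    then have "j = n \<or> j > n" using on by (cases n) auto
    then show "coeff (g1 - monom 1 n) j = 0"
      using lg1 dg1 by (auto simp: coeff_monom coeff_eq_0)
  qed
  moreover have "f - h1 ^ n = pcompose (g1 - monom 1 n) h1"
    unfolding fg1 by (simp add: pcompose_diff pcompose_monom1)
  ultimately have "degree (f - h1 ^ n) \<le> (n - 1) * m"
    by (simp add: degree_pcompose dh1)
  then have "degree (f - h1 ^ n) \<le> m * (n - 1)" by (simp add: mult.commute)
  then have oh1: "odd_poly h1"
    using approx_odd[OF of lh1 dh1 om h10 on nz[folded n_def]] by simp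
  have og1: "odd_poly g1" using odd_outer[OF of fg1 oh1] dh1 m0 by simp
  show ?thesis
    using d\<rho> lg1 og1 lh1 oh1 unfolding g1_def h1_def by blast
qed

end
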